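(* Let $UI(X:Y\setminus Z)$, $UI(X:Z\setminus Y)$, $SI(X:Y;Z)$ and $CI(X:Y;Z)$ be non-negative continuous real functions on $\Delta$ such that for every $P\in\Delta$: (i) $MI(X:(Y,Z)) = SI(X:Y;Z) + UI(X:Y\setminus Z) + UI(X:Z\setminus Y) + CI(X:Y;Z)$, (ii) $MI(X:Y) = SI(X:Y;Z) + UI(X:Y\setminus Z)$ and $MI(X:Z) = SI(X:Y;Z) + UI(X:Z\setminus Y)$, (all quantities evaluated at $P$), and such that (iii) $UI(X:Y\setminus Z)$ and $UI(X:Z\setminus Y)$ take the same value at any two distributions $P,P'\in\Delta$ having the same $(X,Y)$-marginal and the same $(X,Z)$-marginal. Then for every $P\in\Delta$: $UI(X:Y\setminus Z)\le \widetilde{UI}(X:Y\setminus Z)$, $UI(X:Z\setminus Y)\le \widetilde{UI}(X:Z\setminus Y)$, $SI(X:Y;Z)\ge \widetilde{SI}(X:Y;Z)$, and $CI(X:Y;Z)\ge\widetilde{CI}(X:Y;Z)$. Moreover, if for $P\in\Delta$ there exists $Q\in\Delta_P$ with $CI_Q(X:Y;Z)=0$ (i.e. $CI$ evaluated at $Q$ vanishes), then equality holds in all four inequalities at $P$. Conversely, if equality holds at $P$ in one of the four inequalities, then there exists $Q\in\Delta_P$ with $CI_Q(X:Y;Z)=0$.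
   Context: $X,Y,Z$ are random variables with finite state spaces $\mathcal X,\mathcal Y,\mathcal Z$. $\Delta$ denotes the set of all probability distributions on $\mathcal X\times\mathcal Y\times\mathcal Z$ (joint distributions of $X,Y,Z$); $P\in\Delta$ denotes the "true" joint distribution, and information quantities without subscript are computed w.r.t. $P$, while a subscript $Q$ (e.g. $MI_Q$, $H_Q$) means computed w.r.t. $Q\in\Delta$. For $P\in\Delta$, $\Delta_P=\{Q\in\Delta: Q(X=x,Y=y)=P(X=x,Y=y)\text{ and }Q(X=x,Z=z)=P(X=x,Z=z)\ \forall x,y,z\}$. Co-information: $CoI_Q(X;Y;Z)=MI_Q(X:Y)-MI_Q(X:Y|Z)$. Define $\widetilde{UI}(X:Y\setminus Z)=\min_{Q\in\Delta_P}MI_Q(X:Y|Z)$, $\widetilde{UI}(X:Z\setminus Y)=\min_{Q\in\Delta_P}MI_Q(X:Z|Y)$, $\widetilde{SI}(X:Y;Z)=\max_{Q\in\Delta_P}CoI_Q(X;Y;Z)$, $\widetilde{CI}(X:Y;Z)=MI(X:(Y,Z))-\min_{Q\in\Delta_P}MI_Q(X:(Y,Z))$. *)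

theory Defs
  imports "HOL-Analysis.Analysis"
begin

type_synonym ('x,'y,'z) dist3 = "('x \<times> 'y \<times> 'z) \<Rightarrow> real"

definition Delta :: "('x::finite,'y::finite,'z::finite) dist3 set" where
  "Delta = {Q. (\<forall>w. Q w \<ge> 0) \<and> (\<Sum>w\<in>UNIV. Q w) = 1}"

definition pX :: "('x::finite,'y::finite,'z::finite) dist3 \<Rightarrow> 'x \<Rightarrow> real" where
  "pX Q x = (\<Sum>y\<in>UNIV. \<Sum>z\<in>UNIV. Q (x,y,z))"
definition pY :: "('x::finite,'y::finite,'z::finite) dist3 \<Rightarrow> 'y \<Rightarrow> real" where
  "pY Q y = (\<Sum>x\<in>UNIV. \<Sum>z\<in>UNIV. Q (x,y,z))"
definition pZ :: "('x::finite,'y::finite,'z::finite) dist3 \<Rightarrow> 'z \<Rightarrow> real" where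
  "pZ Q z = (\<Sum>x\<in>UNIV. \<Sum>y\<in>UNIV. Q (x,y,z))"
definition pXY :: "('x::finite,'y::finite,'z::finite) dist3 \<Rightarrow> 'x \<Rightarrow> 'y \<Rightarrow> real" where
  "pXY Q x y = (\<Sum>z\<in>UNIV. Q (x,y,z))"
definition pXZ :: "('x::finite,'y::finite,'z::finite) dist3 \<Rightarrow> 'x \<Rightarrow> 'z \<Rightarrow> real" where
  "pXZ Q x z = (\<Sum>y\<in>UNIV. Q (x,y,z))"
definition pYZ :: "('x::finite,'y::finite,'z::finite) dist3 \<Rightarrow> 'y \<Rightarrow> 'z \<Rightarrow> real" where
  "pYZ Q y z = (\<Sum>x\<in>UNIV. Q (x,y,z))"

definition MI_XY :: "('x::finite,'y::finite,'z::finite) dist3 \<Rightarrow> real" where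
  "MI_XY Q = (\<Sum>x\<in>UNIV. \<Sum>y\<in>UNIV. if pXY Q x y = 0 then 0
      else pXY Q x y * log 2 (pXY Q x y / (pX Q x * pY Q y)))"

definition MI_XZ :: "('x::finite,'y::finite,'z::finite) dist3 \<Rightarrow> real" where
  "MI_XZ Q = (\<Sum>x\<in>UNIV. \<Sum>z\<in>UNIV. if pXZ Q x z = 0 then 0
      else pXZ Q x z * log 2 (pXZ Q x z / (pX Q x * pZ Q z)))"

definition MI_X_YZ :: "('x::finite,'y::finite,'z::finite) dist3 \<Rightarrow> real" where
  "MI_X_YZ Q = (\<Sum>x\<in>UNIV. \<Sum>y\<in>UNIV. \<Sum>z\<in>UNIV. if Q (x,y,z) = 0 then 0
      else Q (x,y,z) * log 2 (Q (x,y,z) / (pX Q x * pYZ Q y z)))"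

definition MI_XY_given_Z :: "('x::finite,'y::finite,'z::finite) dist3 \<Rightarrow> real" where
  "MI_XY_given_Z Q = (\<Sum>x\<in>UNIV. \<Sum>y\<in>UNIV. \<Sum>z\<in>UNIV. if Q (x,y,z) = 0 then 0
      else Q (x,y,z) * log 2 (Q (x,y,z) * pZ Q z / (pXZ Q x z * pYZ Q y z)))"

definition MI_XZ_given_Y :: "('x::finite,'y::finite,'z::finite) dist3 \<Rightarrow> real" where
  "MI_XZ_given_Y Q = (\<Sum>x\<in>UNIV. \<Sum>y\<in>UNIV. \<Sum>z\<in>UNIV. if Q (x,y,z) = 0 then 0
      else Q (x,y,z) * log 2 (Q (x,y,z) * pY Q y / (pXY Q x y * pYZ Q y z)))"

definition CoI :: "('x::finite,'y::finite,'z::finite) dist3 \<Rightarrow> real" where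
  "CoI Q = MI_XY Q - MI_XY_given_Z Q"

definition DeltaP :: "('x::finite,'y::finite,'z::finite) dist3 \<Rightarrow> ('x,'y,'z) dist3 set" where
  "DeltaP P = {Q \<in> Delta. pXY Q = pXY P \<and> pXZ Q = pXZ P}"

text \<open>The paper's min/max over the compact set DeltaP P (attained) are written as Inf/Sup.\<close>

definition UIt_Y :: "('x::finite,'y::finite,'z::finite) dist3 \<Rightarrow> real" where
  "UIt_Y P = Inf (MI_XY_given_Z ` DeltaP P)"
definition UIt_Z :: "('x::finite,'y::finite,'z::finite) dist3 \<Rightarrow> real" where
  "UIt_Z P = Inf (MI_XZ_given_Y ` DeltaP P)"
definition SIt :: "('x::finite,'y::finite,'z::finite) dist3 \<Rightarrow> real" where
  "SIt P = Sup (CoI ` DeltaP P)"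
definition CIt :: "('x::finite,'y::finite,'z::finite) dist3 \<Rightarrow> real" where
  "CIt P = MI_X_YZ P - Inf (MI_X_YZ ` DeltaP P)"

end

theory Submission
  imports Defs
begin


lemma le_marg:
  assumes nn: "\<forall>w. (Q::('x::finite,'y::finite,'z::finite) dist3) w \<ge> 0"
  shows "Q (x,y,z) \<le> pXZ Q x z" "Q (x,y,z) \<le> pXY Q x y" "Q (x,y,z) \<le> pYZ Q y z"
    "Q (x,y,z) \<le> pX Q x" "Q (x,y,z) \<le> pY Q y" "Q (x,y,z) \<le> pZ Q z"
proof -
  have s1: "f i \<le> sum f UNIV" if "\<forall>j. f j \<ge> 0" for f :: "'a::finite \<Rightarrow> real" and i
    using member_le_sum[of i UNIV f] that by (metis finite UNIV_I)
  have nn': "\<forall>j. (0::real) \<le> sum g UNIV" if "\<forall>j. g j \<ge> 0" for g :: "'a::finite \<Rightarrow> real"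
    using that by (simp add: sum_nonneg)
  show "Q (x,y,z) \<le> pXZ Q x z" unfolding pXZ_def using s1[of "\<lambda>y. Q (x,y,z)"] nn by auto
  show "Q (x,y,z) \<le> pXY Q x y" unfolding pXY_def using s1[of "\<lambda>z. Q (x,y,z)"] nn by auto
  show "Q (x,y,z) \<le> pYZ Q y z" unfolding pYZ_def using s1[of "\<lambda>x. Q (x,y,z)"] nn by auto
  show "Q (x,y,z) \<le> pX Q x" unfolding pX_def
    using s1[of "\<lambda>z. Q (x,y,z)" z] s1[of "\<lambda>y. \<Sum>z\<in>UNIV. Q (x,y,z)" y] nn
    by (smt (verit) sum_nonneg)
  show "Q (x,y,z) \<le> pY Q y" unfolding pY_def
    using s1[of "\<lambda>z. Q (x,y,z)" z] s1[of "\<lambda>x. \<Sum>z\<in>UNIV. Q (x,y,z)" x] nn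
    by (smt (verit) sum_nonneg)
  show "Q (x,y,z) \<le> pZ Q z" unfolding pZ_def
    using s1[of "\<lambda>y. Q (x,y,z)" y] s1[of "\<lambda>x. \<Sum>y\<in>UNIV. Q (x,y,z)" x] nn
    by (smt (verit) sum_nonneg)
qed

lemma chain1:
  assumes nn: "\<forall>w. (Q::('x::finite,'y::finite,'z::finite) dist3) w \<ge> 0"
  shows "MI_X_YZ Q = MI_XZ Q + MI_XY_given_Z Q"
proof -
  define L where "L x z = log 2 (pXZ Q x z / (pX Q x * pZ Q z))" for x z
  have pt: "(if Q (x,y,z) = 0 then 0 else Q (x,y,z) * log 2 (Q (x,y,z) / (pX Q x * pYZ Q y z)))
     = (if Q (x,y,z) = 0 then 0 else Q (x,y,z) * log 2 (Q (x,y,z) * pZ Q z / (pXZ Q x z * pYZ Q y z)))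
       + Q (x,y,z) * L x z" for x y z
  proof (cases "Q (x,y,z) = 0")
    case False
    then have q: "Q (x,y,z) > 0" using nn by (metis less_eq_real_def)
    note m = le_marg[OF nn, of x y z]
    have p: "pX Q x > 0" "pYZ Q y z > 0" "pZ Q z > 0" "pXZ Q x z > 0" using q m by linarith+
    have "log 2 (Q (x,y,z) * pZ Q z / (pXZ Q x z * pYZ Q y z)) + L x z
        = log 2 (Q (x,y,z) * pZ Q z / (pXZ Q x z * pYZ Q y z) * (pXZ Q x z / (pX Q x * pZ Q z)))"
      unfolding L_def using p q by (subst log_mult) auto
    also have "\<dots> = log 2 (Q (x,y,z) / (pX Q x * pYZ Q y z))" using p by (simp add: field_simps)
    finally have e: "log 2 (Q (x,y,z) * pZ Q z / (pXZ Q x z * pYZ Q y z)) + L x z = log 2 (Q (x,y,z) / (pX Q x * pYZ Q y z))" .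
    show ?thesis using False by (simp only: e[symmetric] if_False ring_distribs)
  qed simp
  have "MI_X_YZ Q = MI_XY_given_Z Q + (\<Sum>x\<in>UNIV. \<Sum>y\<in>UNIV. \<Sum>z\<in>UNIV. Q (x,y,z) * L x z)"
    unfolding MI_X_YZ_def MI_XY_given_Z_def pt by (simp add: sum.distrib)
  also have "(\<Sum>x\<in>UNIV. \<Sum>y\<in>UNIV. \<Sum>z\<in>UNIV. Q (x,y,z) * L x z) = (\<Sum>x\<in>UNIV. \<Sum>z\<in>UNIV. pXZ Q x z * L x z)"
    unfolding pXZ_def by (simp add: sum_distrib_right, intro sum.cong refl, rule sum.swap)
  also have "\<dots> = MI_XZ Q" unfolding MI_XZ_def L_def by (intro sum.cong refl) simp
  finally show ?thesis by simp
qed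

lemma chain2:
  assumes nn: "\<forall>w. (Q::('x::finite,'y::finite,'z::finite) dist3) w \<ge> 0"
  shows "MI_X_YZ Q = MI_XY Q + MI_XZ_given_Y Q"
proof -
  define L where "L x y = log 2 (pXY Q x y / (pX Q x * pY Q y))" for x y
  have pt: "(if Q (x,y,z) = 0 then 0 else Q (x,y,z) * log 2 (Q (x,y,z) / (pX Q x * pYZ Q y z)))
     = (if Q (x,y,z) = 0 then 0 else Q (x,y,z) * log 2 (Q (x,y,z) * pY Q y / (pXY Q x y * pYZ Q y z)))
       + Q (x,y,z) * L x y" for x y z
  proof (cases "Q (x,y,z) = 0")
    case False
    then have q: "Q (x,y,z) > 0" using nn by (metis less_eq_real_def)
    note m = le_marg[OF nn, of x y z]
    have p: "pX Q x > 0" "pYZ Q y z > 0" "pY Q y > 0" "pXY Q x y > 0" using q m by linarith+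
    have "log 2 (Q (x,y,z) * pY Q y / (pXY Q x y * pYZ Q y z)) + L x y
        = log 2 (Q (x,y,z) * pY Q y / (pXY Q x y * pYZ Q y z) * (pXY Q x y / (pX Q x * pY Q y)))"
      unfolding L_def using p q by (subst log_mult) auto
    also have "\<dots> = log 2 (Q (x,y,z) / (pX Q x * pYZ Q y z))" using p by (simp add: field_simps)
    finally have e: "log 2 (Q (x,y,z) * pY Q y / (pXY Q x y * pYZ Q y z)) + L x y = log 2 (Q (x,y,z) / (pX Q x * pYZ Q y z))" .
    show ?thesis using False by (simp only: e[symmetric] if_False ring_distribs)
  qed simp
  have "MI_X_YZ Q = MI_XZ_given_Y Q + (\<Sum>x\<in>UNIV. \<Sum>y\<in>UNIV. \<Sum>z\<in>UNIV. Q (x,y,z) * L x y)"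
    unfolding MI_X_YZ_def MI_XZ_given_Y_def pt by (simp add: sum.distrib)
  also have "(\<Sum>x\<in>UNIV. \<Sum>y\<in>UNIV. \<Sum>z\<in>UNIV. Q (x,y,z) * L x y) = (\<Sum>x\<in>UNIV. \<Sum>y\<in>UNIV. pXY Q x y * L x y)"
    unfolding pXY_def by (simp add: sum_distrib_right)
  also have "\<dots> = MI_XY Q" unfolding MI_XY_def L_def by (intro sum.cong refl) simp
  finally show ?thesis by simp
qed



lemma compact_box: "compact (PiE (UNIV::'a set) (\<lambda>_. {0..1::real}))"
proof -
  have "compactin (product_topology (\<lambda>_. euclidean) UNIV) (PiE (UNIV::'a set) (\<lambda>_. {0..1::real}))"
    by (simp add: compactin_PiE)
  then show ?thesis by (simp add: euclidean_product_topology compactin_euclidean_iff)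
qed

lemma cont_coord: "continuous_on S (\<lambda>Q::'a\<Rightarrow>real. Q i)"
  by (rule continuous_on_subset[OF continuous_on_product_coordinates], simp)

lemma compact_DeltaP: "compact (DeltaP (P::('x::finite,'y::finite,'z::finite) dist3))"
proof -
  let ?C = "{Q::('x,'y,'z) dist3. (\<forall>w. Q w \<ge> 0)} \<inter> {Q. (\<Sum>w\<in>UNIV. Q w) = 1}
     \<inter> (\<Inter>x. \<Inter>y. {Q. pXY Q x y = pXY P x y}) \<inter> (\<Inter>x. \<Inter>z. {Q. pXZ Q x z = pXZ P x z})"
  have c1: "closed {Q::('x,'y,'z) dist3. (\<forall>w. Q w \<ge> 0)}"
    unfolding Collect_all_eq by (intro closed_INT ballI closed_Collect_le continuous_on_const cont_coord)
  have c2: "closed {Q::('x,'y,'z) dist3. (\<Sum>w\<in>UNIV. Q w) = 1}"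
    by (intro closed_Collect_eq continuous_on_const continuous_on_sum cont_coord)
  have c3: "closed (\<Inter>x. \<Inter>y. {Q::('x,'y,'z) dist3. pXY Q x y = pXY P x y})"
    unfolding pXY_def by (intro closed_INT ballI closed_Collect_eq continuous_on_const continuous_on_sum cont_coord)
  have c4: "closed (\<Inter>x. \<Inter>z. {Q::('x,'y,'z) dist3. pXZ Q x z = pXZ P x z})"
    unfolding pXZ_def by (intro closed_INT ballI closed_Collect_eq continuous_on_const continuous_on_sum cont_coord)
  have eq: "DeltaP P = PiE UNIV (\<lambda>_. {0..1::real}) \<inter> ?C"
  proof (intro equalityI subsetI)
    fix Q assume Q: "Q \<in> DeltaP P"
    then have "\<forall>w. Q w \<ge> 0" "(\<Sum>w\<in>UNIV. Q w) = 1" by (auto simp: DeltaP_def Delta_def)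
    then have "Q w \<le> 1" for w using member_le_sum[of w UNIV Q] by (metis finite UNIV_I)
    with Q show "Q \<in> PiE UNIV (\<lambda>_. {0..1::real}) \<inter> ?C"
      unfolding DeltaP_def Delta_def by (auto simp: PiE_def extensional_def)
  next
    fix Q assume "Q \<in> PiE UNIV (\<lambda>_. {0..1::real}) \<inter> ?C"
    then show "Q \<in> DeltaP P" unfolding DeltaP_def Delta_def by (auto intro!: ext)
  qed
  show ?thesis unfolding eq
    by (intro compact_Int_closed compact_box closed_Int c1 c2 c3 c4)
qed

lemma MI_XY_cong:
  assumes "pXY Q = pXY (P::('x::finite,'y::finite,'z::finite) dist3)"
  shows "MI_XY Q = MI_XY P"
proof -
  have "pX Q x = (\<Sum>y\<in>UNIV. pXY Q x y)" "pY Q y = (\<Sum>x\<in>UNIV. pXY Q x y)"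
       "pX P x = (\<Sum>y\<in>UNIV. pXY P x y)" "pY P y = (\<Sum>x\<in>UNIV. pXY P x y)" for x y
    unfolding pX_def pY_def pXY_def by simp_all
  then have "pX Q = pX P" "pY Q = pY P" using assms by (auto intro!: ext)
  then show ?thesis unfolding MI_XY_def using assms by (simp only:)
qed

lemma MI_XZ_cong:
  assumes "pXZ Q = pXZ (P::('x::finite,'y::finite,'z::finite) dist3)"
  shows "MI_XZ Q = MI_XZ P"
proof -
  have "pX Q x = (\<Sum>z\<in>UNIV. pXZ Q x z)" "pX P x = (\<Sum>z\<in>UNIV. pXZ P x z)" for x
    unfolding pX_def pXZ_def by (rule sum.swap)+
  moreover have "pZ Q z = (\<Sum>x\<in>UNIV. pXZ Q x z)" "pZ P z = (\<Sum>x\<in>UNIV. pXZ P x z)" for z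
    unfolding pZ_def pXZ_def by simp_all
  ultimately have "pX Q = pX P" "pZ Q = pZ P" using assms by (auto intro!: ext)
  then show ?thesis unfolding MI_XZ_def using assms by (simp only:)
qed

theorem mainTheorem1:
  fixes UIY UIZ SI CI :: "('x::finite,'y::finite,'z::finite) dist3 \<Rightarrow> real"
  assumes nonneg: "\<forall>P\<in>Delta. UIY P \<ge> 0 \<and> UIZ P \<ge> 0 \<and> SI P \<ge> 0 \<and> CI P \<ge> 0"
    and cont: "continuous_on Delta UIY" "continuous_on Delta UIZ"
              "continuous_on Delta SI" "continuous_on Delta CI"
    and i: "\<forall>P\<in>Delta. MI_X_YZ P = SI P + UIY P + UIZ P + CI P"
    and ii: "\<forall>P\<in>Delta. MI_XY P = SI P + UIY P \<and> MI_XZ P = SI P + UIZ P"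
    and iii: "\<forall>P\<in>Delta. \<forall>P'\<in>Delta. pXY P = pXY P' \<and> pXZ P = pXZ P' \<longrightarrow>
                 UIY P = UIY P' \<and> UIZ P = UIZ P'"
  shows "\<forall>P\<in>Delta.
           UIY P \<le> UIt_Y P \<and> UIZ P \<le> UIt_Z P \<and> SI P \<ge> SIt P \<and> CI P \<ge> CIt P
         \<and> ((\<exists>Q\<in>DeltaP P. CI Q = 0) \<longrightarrow>
              UIY P = UIt_Y P \<and> UIZ P = UIt_Z P \<and> SI P = SIt P \<and> CI P = CIt P)
         \<and> ((UIY P = UIt_Y P \<or> UIZ P = UIt_Z P \<or> SI P = SIt P \<or> CI P = CIt P) \<longrightarrow>
              (\<exists>Q\<in>DeltaP P. CI Q = 0))"
proof
  fix P :: "('x,'y,'z) dist3" assume P: "P \<in> Delta"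
  have PP: "P \<in> DeltaP P" using P by (simp add: DeltaP_def)
  have sub: "DeltaP P \<subseteq> Delta" by (auto simp: DeltaP_def)
  obtain Q0 where Q0: "Q0 \<in> DeltaP P" and Q0min: "\<And>Q. Q \<in> DeltaP P \<Longrightarrow> CI Q0 \<le> CI Q"
    using continuous_attains_inf[OF compact_DeltaP[of P], of CI] PP
      continuous_on_subset[OF cont(4) sub] by blast
  have facts: "MI_XY_given_Z Q = UIY P + CI Q \<and> MI_XZ_given_Y Q = UIZ P + CI Q
      \<and> CoI Q = SI P - CI Q \<and> MI_X_YZ Q = SI P + UIY P + UIZ P + CI Q" if Q: "Q \<in> DeltaP P" for Q
  proof -
    have QD: "Q \<in> Delta" and m: "pXY Q = pXY P" "pXZ Q = pXZ P" using Q by (auto simp: DeltaP_def)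
    have nnQ: "\<forall>w. Q w \<ge> 0" using QD by (simp add: Delta_def)
    have u: "UIY Q = UIY P \<and> UIZ Q = UIZ P" using iii QD P m by blast
    then have u: "UIY Q = UIY P" "UIZ Q = UIZ P" by auto
    have mi: "MI_XY Q = MI_XY P" "MI_XZ Q = MI_XZ P" using MI_XY_cong[OF m(1)] MI_XZ_cong[OF m(2)] .
    have s: "SI Q = SI P"
    proof -
      have "MI_XY Q = SI Q + UIY Q" "MI_XY P = SI P + UIY P" using ii QD P by blast+
      then show ?thesis using mi u by linarith
    qed
    have iQ: "MI_X_YZ Q = SI Q + UIY Q + UIZ Q + CI Q" using i QD by blast
    have iiQ: "MI_XY Q = SI Q + UIY Q" "MI_XZ Q = SI Q + UIZ Q" using ii QD by blast+
    have c1: "MI_X_YZ Q = MI_XZ Q + MI_XY_given_Z Q" by (rule chain1[OF nnQ])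
    have c2: "MI_X_YZ Q = MI_XY Q + MI_XZ_given_Y Q" by (rule chain2[OF nnQ])
    show ?thesis unfolding CoI_def using iQ iiQ c1 c2 u s by linarith
  qed
  have CQ0: "CI Q0 \<ge> 0" using nonneg Q0 sub by auto
  have CQP: "CI Q0 \<le> CI P" using Q0min PP .
  have e1: "UIt_Y P = UIY P + CI Q0" unfolding UIt_Y_def
    by (rule cInf_eq_minimum) (use facts Q0 Q0min in auto)
  have e2: "UIt_Z P = UIZ P + CI Q0" unfolding UIt_Z_def
    by (rule cInf_eq_minimum) (use facts Q0 Q0min in auto)
  have e3: "SIt P = SI P - CI Q0" unfolding SIt_def
    by (rule cSup_eq_maximum) (use facts Q0 Q0min in auto)
  have e4: "Inf (MI_X_YZ ` DeltaP P) = SI P + UIY P + UIZ P + CI Q0"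
    by (rule cInf_eq_minimum) (use facts Q0 Q0min in auto)
  have e5: "CIt P = CI P - CI Q0" unfolding CIt_def e4 using i P by auto
  show "UIY P \<le> UIt_Y P \<and> UIZ P \<le> UIt_Z P \<and> SI P \<ge> SIt P \<and> CI P \<ge> CIt P
         \<and> ((\<exists>Q\<in>DeltaP P. CI Q = 0) \<longrightarrow>
              UIY P = UIt_Y P \<and> UIZ P = UIt_Z P \<and> SI P = SIt P \<and> CI P = CIt P)
         \<and> ((UIY P = UIt_Y P \<or> UIZ P = UIt_Z P \<or> SI P = SIt P \<or> CI P = CIt P) \<longrightarrow>
              (\<exists>Q\<in>DeltaP P. CI Q = 0))"
  proof -
    have z: "(\<exists>Q\<in>DeltaP P. CI Q = 0) \<longleftrightarrow> CI Q0 = 0"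
    proof
      assume "\<exists>Q\<in>DeltaP P. CI Q = 0"
      then obtain Q where "Q \<in> DeltaP P" "CI Q = 0" by blast
      then show "CI Q0 = 0" using Q0min[of Q] CQ0 by linarith
    next
      assume "CI Q0 = 0" then show "\<exists>Q\<in>DeltaP P. CI Q = 0" using Q0 by blast
    qed
    have a: "UIY P \<le> UIt_Y P" "UIZ P \<le> UIt_Z P" "SI P \<ge> SIt P" "CI P \<ge> CIt P"
      using CQ0 e1 e2 e3 e5 by linarith+
    have b: "CI Q0 = 0 \<Longrightarrow> UIY P = UIt_Y P \<and> UIZ P = UIt_Z P \<and> SI P = SIt P \<and> CI P = CIt P"
      using e1 e2 e3 e5 by simp
    have c: "UIY P = UIt_Y P \<or> UIZ P = UIt_Z P \<or> SI P = SIt P \<or> CI P = CIt P \<Longrightarrow> CI Q0 = 0"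
      using e1 e2 e3 e5 by linarith
    have b': "(\<exists>Q\<in>DeltaP P. CI Q = 0) \<longrightarrow> UIY P = UIt_Y P \<and> UIZ P = UIt_Z P \<and> SI P = SIt P \<and> CI P = CIt P"
    proof
      assume h: "\<exists>Q\<in>DeltaP P. CI Q = 0"
      show "UIY P = UIt_Y P \<and> UIZ P = UIt_Z P \<and> SI P = SIt P \<and> CI P = CIt P"
        by (rule b, rule z[THEN iffD1, OF h])
    qed
    have c': "(UIY P = UIt_Y P \<or> UIZ P = UIt_Z P \<or> SI P = SIt P \<or> CI P = CIt P) \<longrightarrow> (\<exists>Q\<in>DeltaP P. CI Q = 0)"
    proof
      assume h: "UIY P = UIt_Y P \<or> UIZ P = UIt_Z P \<or> SI P = SIt P \<or> CI P = CIt P"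
      show "\<exists>Q\<in>DeltaP P. CI Q = 0" by (rule z[THEN iffD2, OF c[OF h]])
    qed
    show ?thesis by (intro conjI a b' c')
  qed
qed

end
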